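(* Every scattered compact Hausdorff space $K$ of height $2$ has the regular extension property.
   Context: Height $2$ means that the second Cantor--Bendixson derivative $K^{(2)}$ is empty (where $K'$ is the set of non-isolated points of $K$ and $K^{(2)}=(K')'$). $C(K)$ is the Banach space of real-valued continuous functions on $K$ with the supremum norm and $\mathbf 1_K$ its unit. For a closed $F\subseteq K$, a regular extension operator for $F$ in $K$ is a bounded linear map $E:C(F)\to C(K)$ with $E(f)|_F=f$ for all $f$, $\|E\|\le1$ and $E(\mathbf 1_F)=\mathbf 1_K$. $K$ has the regular extension property if every nonempty closed subset admits a regular extension operator in $K$. *)

theory Defs
  imports "HOL-Analysis.Analysis"
begin

definition scattered_space :: "'a topology \<Rightarrow> bool" where
  "scattered_space X \<longleftrightarrow>
     (\<forall>S. S \<subseteq> topspace X \<and> S \<noteq> {} \<longrightarrow> (\<exists>x\<in>S. x \<notin> X derived_set_of S))"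

definition CB_deriv :: "'a topology \<Rightarrow> 'a set" where
  "CB_deriv X = X derived_set_of (topspace X)"

definition CB_deriv2 :: "'a topology \<Rightarrow> 'a set" where
  "CB_deriv2 X = CB_deriv (subtopology X (CB_deriv X))"

text \<open>C(S) as concrete carrier: continuous real functions on the subspace S,
  normalised to be 0 outside S (so each element of C(S) has a unique representative).\<close>
definition Cfun :: "'a topology \<Rightarrow> 'a set \<Rightarrow> ('a \<Rightarrow> real) set" where
  "Cfun X S = {f. continuous_map (subtopology X S) euclideanreal f \<and> (\<forall>x. x \<notin> S \<longrightarrow> f x = 0)}"

definition unit_fun :: "'a set \<Rightarrow> 'a \<Rightarrow> real" where
  "unit_fun S = (\<lambda>x. if x \<in> S then 1 else 0)"

definition regular_extension_operator ::
  "'a topology \<Rightarrow> 'a set \<Rightarrow> (('a \<Rightarrow> real) \<Rightarrow> ('a \<Rightarrow> real)) \<Rightarrow> bool" where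
  "regular_extension_operator X F E \<longleftrightarrow>
     (\<forall>f\<in>Cfun X F. E f \<in> Cfun X (topspace X)) \<and>
     (\<forall>f\<in>Cfun X F. \<forall>g\<in>Cfun X F. \<forall>a b::real.
         E (\<lambda>x. a * f x + b * g x) = (\<lambda>x. a * E f x + b * E g x)) \<and>
     (\<forall>f\<in>Cfun X F. \<forall>x\<in>F. E f x = f x) \<and>
     (\<forall>f\<in>Cfun X F. \<forall>x\<in>topspace X. \<bar>E f x\<bar> \<le> (SUP y\<in>F. \<bar>f y\<bar>)) \<and>
     E (unit_fun F) = unit_fun (topspace X)"

definition regular_extension_property :: "'a topology \<Rightarrow> bool" where
  "regular_extension_property X \<longleftrightarrow>
     (\<forall>F. closedin X F \<and> F \<noteq> {} \<longrightarrow> (\<exists>E. regular_extension_operator X F E))"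

end

theory Submission
  imports Defs
begin

lemma retraction_exists:
  fixes K :: "'a topology"
  assumes cK: "compact_space K" and HK: "Hausdorff_space K"
    and d2: "CB_deriv2 K = {}"
    and F: "closedin K F" "F \<noteq> {}"
  shows "\<exists>\<phi>. continuous_map K (subtopology K F) \<phi> \<and> (\<forall>x\<in>F. \<phi> x = x)"
proof -
  define D where "D = K derived_set_of topspace K"
  have Dsub: "D \<subseteq> topspace K" unfolding D_def by (rule derived_set_of_subset_topspace)
  have "D \<inter> K derived_set_of D = {}"
    using d2 Dsub unfolding CB_deriv2_def CB_deriv_def D_def[symmetric]
    by (simp add: derived_set_of_subtopology Int_absorb1 Int_absorb2)
  moreover have "compactin K D"
    unfolding D_def using cK HK closedin_compact_space closedin_derived_set_of by blast
  ultimately have finD: "finite D" using discrete_compactin_eq_finite by blast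
  have "\<forall>x y. \<exists>p. x \<in> topspace K \<and> y \<in> topspace K \<and> x \<noteq> y \<longrightarrow>
      openin K (fst p) \<and> openin K (snd p) \<and> x \<in> fst p \<and> y \<in> snd p \<and> disjnt (fst p) (snd p)"
    using HK unfolding Hausdorff_space_def by (metis fst_conv snd_conv)
  then obtain C where C: "\<And>x y. x \<in> topspace K \<Longrightarrow> y \<in> topspace K \<Longrightarrow> x \<noteq> y \<Longrightarrow>
      openin K (fst (C x y)) \<and> openin K (snd (C x y)) \<and> x \<in> fst (C x y) \<and> y \<in> snd (C x y)
      \<and> disjnt (fst (C x y)) (snd (C x y))"
    by metis
  define V where "V q = (\<Inter>r \<in> D - {q}. fst (C q r) \<inter> snd (C r q)) \<inter> topspace K" for q
  have Vopen: "openin K (V q)" if "q \<in> D" for q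
    unfolding V_def using finD that Dsub C by (intro openin_INT) (auto intro!: openin_Int)
  have Vin: "q \<in> V q" if "q \<in> D" for q
    unfolding V_def using that Dsub C by auto
  have Vdisj: "V q \<inter> V r = {}" if "q \<in> D" "r \<in> D" "q \<noteq> r" for q r
  proof -
    have "V q \<inter> V r \<subseteq> fst (C q r) \<inter> snd (C q r)"
      unfolding V_def using that by auto
    thus ?thesis using C[of q r] that Dsub by (auto simp: disjnt_def)
  qed
  obtain a where a: "a \<in> F" using F by blast
  have Ftop: "F \<subseteq> topspace K" using F closedin_subset by blast
  define \<phi> where "\<phi> x = (if x \<in> F then x else if \<exists>p\<in>D \<inter> F. x \<in> V p
      then (THE p. p \<in> D \<inter> F \<and> x \<in> V p) else a)" for x
  have phiV: "\<phi> x = p" if "x \<notin> F" "p \<in> D \<inter> F" "x \<in> V p" for x p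
  proof -
    have "(THE p. p \<in> D \<inter> F \<and> x \<in> V p) = p"
      using that Vdisj by (intro the_equality) auto
    thus ?thesis using that unfolding \<phi>_def by auto
  qed
  have phiF: "\<phi> x \<in> F" for x
  proof (cases "x \<in> F")
    case True thus ?thesis by (simp add: \<phi>_def)
  next
    case False
    show ?thesis
    proof (cases "\<exists>p\<in>D \<inter> F. x \<in> V p")
      case True
      then obtain p where "p \<in> D \<inter> F" "x \<in> V p" by blast
      thus ?thesis using phiV False by auto
    next
      case False2: False
      thus ?thesis using False a by (simp add: \<phi>_def)
    qed
  qed
  have cont: "continuous_map K K \<phi>"
    unfolding continuous_map_def
  proof (intro conjI allI impI)
    show "\<phi> \<in> topspace K \<rightarrow> topspace K" using phiF Ftop by auto
    fix U assume U: "openin K U"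
    show "openin K {x \<in> topspace K. \<phi> x \<in> U}"
    proof (subst openin_subopen, intro ballI)
      fix x assume x: "x \<in> {x \<in> topspace K. \<phi> x \<in> U}"
      show "\<exists>T. openin K T \<and> x \<in> T \<and> T \<subseteq> {x \<in> topspace K. \<phi> x \<in> U}"
      proof (cases "x \<in> D")
        case False
        then obtain T where T: "x \<in> T" "openin K T" "\<not>(\<exists>y\<noteq>x. y \<in> topspace K \<and> y \<in> T)"
          using x unfolding D_def in_derived_set_of by auto
        have "T = {x}" using T openin_subset[OF T(2)] by auto
        thus ?thesis using T x by auto
      next
        case True
        show ?thesis
        proof (cases "x \<in> F")
          case True2: True
          have "\<phi> x = x" using True2 by (simp add: \<phi>_def)
          hence xU: "x \<in> U" using x by auto
          have "V x \<inter> U \<subseteq> {x \<in> topspace K. \<phi> x \<in> U}"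
          proof
            fix y assume y: "y \<in> V x \<inter> U"
            have yt: "y \<in> topspace K" using y openin_subset[OF U] by auto
            show "y \<in> {x \<in> topspace K. \<phi> x \<in> U}"
            proof (cases "y \<in> F")
              case True thus ?thesis using y yt by (simp add: \<phi>_def)
            next
              case False thus ?thesis using phiV[of y x] y yt True True2 xU by auto
            qed
          qed
          thus ?thesis using Vopen[OF True] U Vin[OF True] xU by (intro exI[of _ "V x \<inter> U"]) auto
        next
          case False2: False
          have "V x - F \<subseteq> {x \<in> topspace K. \<phi> x \<in> U}"
          proof
            fix y assume y: "y \<in> V x - F"
            have yt: "y \<in> topspace K" using y Vopen[OF True] openin_subset by blast
            have "\<not>(\<exists>p\<in>D \<inter> F. y \<in> V p)" using y Vdisj True False2 by blast
            hence "\<phi> y = a" using y by (simp add: \<phi>_def)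
            moreover have "\<not>(\<exists>p\<in>D \<inter> F. x \<in> V p)" using Vin[OF True] Vdisj True False2 by blast
            hence "\<phi> x = a" using False2 by (simp add: \<phi>_def)
            ultimately show "y \<in> {x \<in> topspace K. \<phi> x \<in> U}" using x yt by auto
          qed
          moreover have "openin K (V x - F)" using Vopen[OF True] F by (intro openin_diff) auto
          ultimately show ?thesis using Vin[OF True] False2 by blast
        qed
      qed
    qed
  qed
  have "continuous_map K (subtopology K F) \<phi>"
    using cont phiF by (intro continuous_map_into_subtopology) auto
  moreover have "\<forall>x\<in>F. \<phi> x = x" by (simp add: \<phi>_def)
  ultimately show ?thesis by blast
qed

theorem corollary3p13:
  fixes K :: "'a topology"
  assumes "compact_space K" and "Hausdorff_space K"
    and "scattered_space K"
    and "CB_deriv2 K = {}"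
  shows "regular_extension_property K"
  unfolding regular_extension_property_def
proof (intro allI impI)
  fix F assume F: "closedin K F \<and> F \<noteq> {}"
  then obtain \<phi> where phi: "continuous_map K (subtopology K F) \<phi>" "\<forall>x\<in>F. \<phi> x = x"
    using retraction_exists assms by blast
  have Ftop: "F \<subseteq> topspace K" using F closedin_subset by blast
  have phiF: "\<phi> x \<in> F" if "x \<in> topspace K" for x
    using phi(1) that unfolding continuous_map_def by auto
  define E where "E f = (\<lambda>x. if x \<in> topspace K then f (\<phi> x) else 0)" for f :: "'a \<Rightarrow> real"
  have cpt: "compact_space (subtopology K F)"
    using F assms(1) closedin_compact_space compact_space_subtopology by blast
  have bdd: "bdd_above ((\<lambda>y. \<bar>f y\<bar>) ` F)" if f: "f \<in> Cfun K F" for f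
  proof -
    have cf: "continuous_map (subtopology K F) euclideanreal f" using f by (simp add: Cfun_def)
    have "compactin (subtopology K F) (topspace (subtopology K F))"
      using cpt compact_space_def by blast
    hence "compactin euclideanreal (f ` F)"
      using image_compactin[OF _ cf] Ftop by (simp add: Int_absorb1)
    hence "bounded (f ` F)" by (simp add: compact_imp_bounded)
    then obtain B where "\<forall>x\<in>f ` F. norm x \<le> B" using bounded_iff by blast
    thus ?thesis by (auto simp: bdd_above_def)
  qed
  have "regular_extension_operator K F E"
    unfolding regular_extension_operator_def
  proof (intro conjI ballI allI)
    fix f assume f: "f \<in> Cfun K F"
    have cf: "continuous_map (subtopology K F) euclideanreal f" using f by (simp add: Cfun_def)
    have "continuous_map K euclideanreal (f \<circ> \<phi>)"
      using phi(1) cf by (rule continuous_map_compose)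
    hence "continuous_map K euclideanreal (E f)"
      by (rule continuous_map_eq) (simp add: E_def)
    thus "E f \<in> Cfun K (topspace K)" by (simp add: Cfun_def E_def)
  next
    fix f g a b assume "f \<in> Cfun K F" "g \<in> Cfun K F"
    show "E (\<lambda>x. a * f x + b * g x) = (\<lambda>x. a * E f x + b * E g x)"
      by (auto simp: E_def)
  next
    fix f x assume "f \<in> Cfun K F" "x \<in> F"
    thus "E f x = f x" using phi(2) Ftop by (auto simp: E_def)
  next
    fix f x assume f: "f \<in> Cfun K F" and x: "x \<in> topspace K"
    show "\<bar>E f x\<bar> \<le> (SUP y\<in>F. \<bar>f y\<bar>)"
      using cSUP_upper[OF phiF[OF x] bdd[OF f]] x by (simp add: E_def)
  next
    show "E (unit_fun F) = unit_fun (topspace K)"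
      using phiF by (auto simp: E_def unit_fun_def)
  qed
  thus "\<exists>E. regular_extension_operator K F E" by blast
qed

end
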